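(* Let $N$ be a positive integer divisible by $4$, let $h>0$ and $\sigma\ge 0$, and set $N_1=N$, $N_2=N/2$, $N_3=N/4$. Let $u_1,\dots,u_N$ be deterministic real numbers and let $\xi_1,\dots,\xi_N$ be independent real random variables with $\mathbb{E}(\xi_i)=0$ and $\mathbb{E}(\xi_i^2)=\frac{2\sigma^2}{Nh}$ for all $i$. Put $u_0(x_i)=u_i+\xi_i$ for $i=1,\dots,N$. Define $v^0_i=u_0(x_i)$ for $i=1,\dots,N_1$ and recursively $v^j_i=\frac{v^{j-1}_{2i}+v^{j-1}_{2i-1}}{2}$ for $i=1,\dots,N_{j+1}$, $j=1,2$. Define $$V_{j+1}=\sum_{i=1}^{N_{j+1}-1}|v^j_{i+1}-v^j_i|^2\cdot\frac{1}{2^j h},\qquad j=0,1,2,$$ and $$\hat\sigma^2=h^2\,\frac{\left(\frac{119}{16}-\frac{27}{4N}\right)V_1+\left(\frac{9}{4N}-\frac{49}{16}\right)V_2+\left(\frac{9}{2N}-\frac{35}{8}\right)V_3}{\frac{3577}{128}+\frac{189}{8N^2}-\frac{819}{16N}}.$$ Similarly define $u^{(0)}_i=u_i$ for $i=1,\dots,N_1$, $u^{(j)}_i=\frac{u^{(j-1)}_{2i-1}+u^{(j-1)}_{2i}}{2}$ for $i=1,\dots,N_{j+1}$, $j=1,2$, and $$V^c_{j+1}=\sum_{i=1}^{N_{j+1}-1}\frac{|u^{(j)}_{i+1}-u^{(j)}_i|^2}{2^{j}h},\qquad j=0,1,2.$$ Then $\hat\sigma^2$ is an estimate of $\sigma^2$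 whose bias is $$\mathbb{E}(\hat\sigma^2)-\sigma^2=h^2\,\frac{\left(\frac{49}{16}-\frac{9}{4N}\right)(V^c_1-V^c_2)+\left(\frac{35}{8}-\frac{9}{2N}\right)(V^c_1-V^c_3)}{\frac{3577}{128}+\frac{189}{8N^2}-\frac{819}{16N}}.$$
   Context: Here $u_0(x_i)$ models an observed (noisy) traffic velocity in the $i$-th time slice of length $h$, $u_i$ the clean velocity and $\xi_i$ the noise; $\sigma$ is the noise-strength parameter. The quantities $V_1,V_2,V_3$ are discrete squared variations of the observed data at three resolutions obtained by successive pairwise averaging, and $V^c_1,V^c_2,V^c_3$ are the analogous quantities for the clean data. *)

theory Defs
  imports "HOL-Probability.Probability"
begin

fun avg_level :: "nat \<Rightarrow> (nat \<Rightarrow> real) \<Rightarrow> nat \<Rightarrow> real" where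
  "avg_level 0 f i = f i"
| "avg_level (Suc j) f i = (avg_level j f (2*i) + avg_level j f (2*i - 1)) / 2"

text \<open>Discrete squared variation at resolution j (j = 0,1,2 give V_1,V_2,V_3):
  sum over i = 1 .. N/2^j - 1 of |w_{i+1} - w_i|^2 / (2^j h).\<close>
definition sq_var :: "nat \<Rightarrow> real \<Rightarrow> nat \<Rightarrow> (nat \<Rightarrow> real) \<Rightarrow> real" where
  "sq_var N h j f =
     (\<Sum>i\<in>{1..<N div 2^j}. \<bar>avg_level j f (i+1) - avg_level j f i\<bar>^2 / (2^j * h))"

definition sigma_denom :: "nat \<Rightarrow> real" where
  "sigma_denom N = 3577/128 + 189/(8 * real N^2) - 819/(16 * real N)"

definition sigma_hat_sq :: "nat \<Rightarrow> real \<Rightarrow> (nat \<Rightarrow> real) \<Rightarrow> real" where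
  "sigma_hat_sq N h f = h^2 *
     ((119/16 - 27/(4 * real N)) * sq_var N h 0 f
      + (9/(4 * real N) - 49/16) * sq_var N h 1 f
      + (9/(2 * real N) - 35/8) * sq_var N h 2 f) / sigma_denom N"

end

theory Submission imports Defs begin


lemma sum_lessThan_add_split:
  "sum g {..<m+(n::nat)} = sum g {..<m} + (\<Sum>k<n. g (m+k))"
  by (induct n) (simp_all add: add.assoc)

lemma avg_formula:
  "avg_level j f (Suc p) = (\<Sum>k<2^j. f (2^j*p + k + 1)) / 2^j"
proof (induct j arbitrary: p)
  case 0
  then show ?case by simp
next
  case (Suc j)
  have e1: "2 * Suc p = Suc (2*p+1)" and e2: "2 * Suc p - 1 = Suc (2*p)" by auto
  have A: "avg_level (Suc j) f (Suc p) = ((\<Sum>k<2^j. f (2^j*(2*p+1) + k + 1)) + (\<Sum>k<2^j. f (2^j*(2*p) + k + 1))) / 2^(Suc j)"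
  proof -
    have "avg_level (Suc j) f (Suc p) =
      (avg_level j f (Suc (2*p+1)) + avg_level j f (Suc (2*p))) / 2"
      by (simp only: avg_level.simps e2) (simp only: e1)
    also have "\<dots> = ((\<Sum>k<2^j. f (2^j*(2*p+1) + k + 1)) + (\<Sum>k<2^j. f (2^j*(2*p) + k + 1))) / 2^(Suc j)"
      unfolding Suc by (simp add: field_simps)
    finally show ?thesis .
  qed
  have B1: "(\<Sum>k<2^j. f (2^j*(2*p+1) + k + 1)) = (\<Sum>k<2^j. f (2^(Suc j)*p + (2^j + k) + 1))"
    by (rule sum.cong) (simp_all add: algebra_simps)
  have B0: "(\<Sum>k<2^j. f (2^j*(2*p) + k + 1)) = (\<Sum>k<2^j. f (2^(Suc j)*p + k + 1))"
    by (rule sum.cong) (simp_all add: algebra_simps)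
  have C: "(\<Sum>k<2^(Suc j). f (2^(Suc j)*p + k + 1)) = (\<Sum>k<2^j. f (2^(Suc j)*p + k + 1)) + (\<Sum>k<2^j. f (2^(Suc j)*p + (2^j + k) + 1))"
    using sum_lessThan_add_split[of "\<lambda>k. f (2^(Suc j)*p + k + 1)" "2^j" "2^j"]
    by (simp add: mult_2)
  show ?case unfolding A B1 B0 C by (simp only: add.commute)
qed

definition cc :: "nat \<Rightarrow> nat \<Rightarrow> real" where
  "cc j k = (if k < 2^j then -1 else 1) / 2^j"

lemma diff_formula:
  "avg_level j f (Suc (Suc p)) - avg_level j f (Suc p) =
     (\<Sum>k<2^(Suc j). cc j k * f (2^j*p + k + 1))"
proof -
  have "(\<Sum>k<2^(Suc j). cc j k * f (2^j*p + k + 1)) =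
     (\<Sum>k<2^j. cc j k * f (2^j*p + k + 1)) + (\<Sum>k<2^j. cc j (2^j+k) * f (2^j*p + (2^j+k) + 1))"
    using sum_lessThan_add_split[of "\<lambda>k. cc j k * f (2^j*p + k + 1)" "2^j" "2^j"]
    by (simp add: mult_2)
  also have "(\<Sum>k<2^j. cc j k * f (2^j*p + k + 1)) = - (\<Sum>k<2^j. f (2^j*p + k + 1)) / 2^j"
    by (simp add: cc_def sum_negf sum_divide_distrib)
  also have "(\<Sum>k<2^j. cc j (2^j+k) * f (2^j*p + (2^j+k) + 1)) = (\<Sum>k<2^j. f (2^j*Suc p + k + 1)) / 2^j"
    by (simp add: cc_def sum_divide_distrib algebra_simps)
  finally show ?thesis unfolding avg_formula by (simp add: diff_divide_distrib)
qed

lemma cc_sq1: "(cc j k)^2 = 1 / (2^j)^2"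
  by (simp add: cc_def power_divide split: if_split)

lemma cc_sq: "(\<Sum>k<2^(Suc j). (cc j k)^2) = 2 / 2^j"
  unfolding cc_sq1 by (simp add: power2_eq_square)



locale noise = prob_space M for M :: "'a measure" +
  fixes \<xi> :: "nat \<Rightarrow> 'a \<Rightarrow> real" and I :: "nat set" and s :: real
  assumes ind: "indep_vars (\<lambda>_. borel) \<xi> I"
    and intg: "\<And>i. i \<in> I \<Longrightarrow> integrable M (\<xi> i)"
    and mean: "\<And>i. i \<in> I \<Longrightarrow> expectation (\<xi> i) = 0"
    and intg2: "\<And>i. i \<in> I \<Longrightarrow> integrable M (\<lambda>\<omega>. (\<xi> i \<omega>)^2)"
    and var: "\<And>i. i \<in> I \<Longrightarrow> expectation (\<lambda>\<omega>. (\<xi> i \<omega>)^2) = s"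
begin

lemma cross:
  assumes "k \<in> I" "l \<in> I"
  shows "integrable M (\<lambda>\<omega>. \<xi> k \<omega> * \<xi> l \<omega>)
    \<and> expectation (\<lambda>\<omega>. \<xi> k \<omega> * \<xi> l \<omega>) = (if k = l then s else 0)"
proof (cases "k = l")
  case True
  then show ?thesis using intg2[OF assms(1)] var[OF assms(1)]
    by (simp add: power2_eq_square)
next
  case False
  have ind2: "indep_vars (\<lambda>_. borel) \<xi> {k, l}"
    by (rule indep_vars_subset[OF ind]) (use assms in auto)
  have pr: "(\<lambda>\<omega>. \<Prod>i\<in>{k,l}. \<xi> i \<omega>) = (\<lambda>\<omega>. \<xi> k \<omega> * \<xi> l \<omega>)"
    using False by simp
  have "integrable M (\<lambda>\<omega>. \<Prod>i\<in>{k,l}. \<xi> i \<omega>)"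
    by (rule indep_vars_integrable) (use ind2 assms intg in auto)
  moreover have "expectation (\<lambda>\<omega>. \<Prod>i\<in>{k,l}. \<xi> i \<omega>) = (\<Prod>i\<in>{k,l}. expectation (\<xi> i))"
    by (rule indep_vars_lebesgue_integral) (use ind2 assms intg in auto)
  ultimately show ?thesis using False mean assms unfolding pr by simp
qed

lemma lin:
  assumes "finite K" "g ` K \<subseteq> I"
  shows "integrable M (\<lambda>\<omega>. \<Sum>k\<in>K. c k * \<xi> (g k) \<omega>)
    \<and> expectation (\<lambda>\<omega>. \<Sum>k\<in>K. c k * \<xi> (g k) \<omega>) = 0"
proof -
  have gi: "\<And>k. k \<in> K \<Longrightarrow> g k \<in> I" using assms by auto
  have "\<And>k. k \<in> K \<Longrightarrow> integrable M (\<lambda>\<omega>. c k * \<xi> (g k) \<omega>)"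
    using gi intg by auto
  moreover have "expectation (\<lambda>\<omega>. \<Sum>k\<in>K. c k * \<xi> (g k) \<omega>) = (\<Sum>k\<in>K. expectation (\<lambda>\<omega>. c k * \<xi> (g k) \<omega>))"
    by (rule Bochner_Integration.integral_sum) (use gi intg in auto)
  ultimately show ?thesis using gi mean by auto
qed

lemma quad:
  assumes "finite K" "inj_on g K" "g ` K \<subseteq> I"
  shows "integrable M (\<lambda>\<omega>. (\<Sum>k\<in>K. c k * \<xi> (g k) \<omega>)^2)
    \<and> expectation (\<lambda>\<omega>. (\<Sum>k\<in>K. c k * \<xi> (g k) \<omega>)^2) = s * (\<Sum>k\<in>K. (c k)^2)"
proof -
  have gi: "\<And>k. k \<in> K \<Longrightarrow> g k \<in> I" using assms by auto
  have eq: "(\<lambda>\<omega>. (\<Sum>k\<in>K. c k * \<xi> (g k) \<omega>)^2) =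
     (\<lambda>\<omega>. \<Sum>k\<in>K. \<Sum>l\<in>K. c k * c l * (\<xi> (g k) \<omega> * \<xi> (g l) \<omega>))"
    by (auto simp: power2_eq_square sum_product intro!: sum.cong)
  have ii: "\<And>k l. k \<in> K \<Longrightarrow> l \<in> K \<Longrightarrow> integrable M (\<lambda>\<omega>. c k * c l * (\<xi> (g k) \<omega> * \<xi> (g l) \<omega>))"
    using cross gi by auto
  have i1: "\<And>k. k \<in> K \<Longrightarrow> integrable M (\<lambda>\<omega>. \<Sum>l\<in>K. c k * c l * (\<xi> (g k) \<omega> * \<xi> (g l) \<omega>))"
    using ii by auto
  have "expectation (\<lambda>\<omega>. \<Sum>k\<in>K. \<Sum>l\<in>K. c k * c l * (\<xi> (g k) \<omega> * \<xi> (g l) \<omega>))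
      = (\<Sum>k\<in>K. expectation (\<lambda>\<omega>. \<Sum>l\<in>K. c k * c l * (\<xi> (g k) \<omega> * \<xi> (g l) \<omega>)))"
    by (rule Bochner_Integration.integral_sum) (use i1 in auto)
  also have "\<dots> = (\<Sum>k\<in>K. \<Sum>l\<in>K. expectation (\<lambda>\<omega>. c k * c l * (\<xi> (g k) \<omega> * \<xi> (g l) \<omega>)))"
  proof (rule sum.cong[OF refl])
    fix k assume "k \<in> K"
    then show "expectation (\<lambda>\<omega>. \<Sum>l\<in>K. c k * c l * (\<xi> (g k) \<omega> * \<xi> (g l) \<omega>)) = (\<Sum>l\<in>K. expectation (\<lambda>\<omega>. c k * c l * (\<xi> (g k) \<omega> * \<xi> (g l) \<omega>)))"
      by (intro Bochner_Integration.integral_sum ii)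
  qed
  also have "\<dots> = (\<Sum>k\<in>K. \<Sum>l\<in>K. if l = k then c k * c k * s else 0)"
  proof (intro sum.cong refl)
    fix k l assume kl: "k \<in> K" "l \<in> K"
    have "(g k = g l) = (k = l)" using assms(2) kl by (auto dest: inj_onD)
    then show "expectation (\<lambda>\<omega>. c k * c l * (\<xi> (g k) \<omega> * \<xi> (g l) \<omega>)) = (if l = k then c k * c k * s else 0)"
      using cross[OF gi[OF kl(1)] gi[OF kl(2)]] by auto
  qed
  also have "\<dots> = s * (\<Sum>k\<in>K. (c k)^2)"
    using assms(1) by (simp add: sum_distrib_left power2_eq_square mult.commute)
  finally show ?thesis unfolding eq using i1 by auto
qed

lemma shifted:
  assumes "finite K" "inj_on g K" "g ` K \<subseteq> I"
  shows "integrable M (\<lambda>\<omega>. (d + (\<Sum>k\<in>K. c k * \<xi> (g k) \<omega>))^2)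
    \<and> expectation (\<lambda>\<omega>. (d + (\<Sum>k\<in>K. c k * \<xi> (g k) \<omega>))^2) = d^2 + s * (\<Sum>k\<in>K. (c k)^2)"
proof -
  define L where "L = (\<lambda>\<omega>. \<Sum>k\<in>K. c k * \<xi> (g k) \<omega>)"
  have L1: "integrable M L" "expectation L = 0" using lin[OF assms(1,3)] unfolding L_def by auto
  have L2: "integrable M (\<lambda>\<omega>. (L \<omega>)^2)" "expectation (\<lambda>\<omega>. (L \<omega>)^2) = s * (\<Sum>k\<in>K. (c k)^2)"
    using quad[OF assms] unfolding L_def by auto
  have eq: "(\<lambda>\<omega>. (d + L \<omega>)^2) = (\<lambda>\<omega>. d^2 + (2*d * L \<omega> + (L \<omega>)^2))"
    by (auto simp: power2_eq_square algebra_simps)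
  have i2: "integrable M (\<lambda>\<omega>. 2*d * L \<omega>)" using L1 by auto
  have "integrable M (\<lambda>\<omega>. d^2 + (2*d * L \<omega> + (L \<omega>)^2))"
    using i2 L2 by auto
  moreover have "expectation (\<lambda>\<omega>. d^2 + (2*d * L \<omega> + (L \<omega>)^2)) = d^2 + (2*d*expectation L + expectation (\<lambda>\<omega>. (L \<omega>)^2))"
    using i2 L2 L1 prob_space by (simp add: integral_add)
  ultimately have "integrable M (\<lambda>\<omega>. (d + L \<omega>)^2) \<and> expectation (\<lambda>\<omega>. (d + L \<omega>)^2) = d^2 + s * (\<Sum>k\<in>K. (c k)^2)"
    unfolding eq using L1 L2 by simp
  then show ?thesis by (simp add: L_def)
qed

end


context noise begin

lemma term_lemma:
  assumes NI: "{1..N} \<subseteq> I" and iN: "i \<in> {1..<N div 2^j}"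
  shows "integrable M (\<lambda>\<omega>. \<bar>avg_level j (\<lambda>i. u i + \<xi> i \<omega>) (i+1) - avg_level j (\<lambda>i. u i + \<xi> i \<omega>) i\<bar>^2 / (2^j*h))
    \<and> expectation (\<lambda>\<omega>. \<bar>avg_level j (\<lambda>i. u i + \<xi> i \<omega>) (i+1) - avg_level j (\<lambda>i. u i + \<xi> i \<omega>) i\<bar>^2 / (2^j*h))
      = \<bar>avg_level j u (i+1) - avg_level j u i\<bar>^2 / (2^j*h) + s * (2/2^j) / (2^j*h)"
proof -
  obtain p where ip: "i = Suc p" using iN by (cases i) auto
  define g where "g = (\<lambda>k::nat. 2^j*p + k + 1)"
  define K where "K = {..<(2::nat)^(Suc j)}"
  have "Suc (Suc p) \<le> N div 2^j" using iN ip by auto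
  then have "2^j * Suc (Suc p) \<le> 2^j * (N div 2^j)" by (rule mult_le_mono2)
  also have "\<dots> \<le> N" by simp
  finally have pN: "2^j * Suc (Suc p) \<le> N" .
  have gI: "g ` K \<subseteq> I"
  proof
    fix x assume "x \<in> g ` K"
    then obtain k where k: "k < 2^(Suc j)" "x = g k" unfolding K_def by auto
    have "g k \<le> 2^j * Suc (Suc p)" using k(1) unfolding g_def by (simp add: algebra_simps)
    then have "x \<in> {1..N}" using pN k(2) unfolding g_def by auto
    then show "x \<in> I" using NI by auto
  qed
  have inj: "inj_on g K" unfolding g_def by (rule inj_onI) simp
  have fin: "finite K" unfolding K_def by simp
  have D: "\<And>f. avg_level j f (i+1) - avg_level j f i = (\<Sum>k\<in>K. cc j k * f (g k))"
    unfolding ip K_def g_def using diff_formula by simp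
  define d where "d = (\<Sum>k\<in>K. cc j k * u (g k))"
  have Du: "\<bar>avg_level j u (i+1) - avg_level j u i\<bar>^2 = d^2" unfolding D d_def by simp
  have Dx: "\<And>\<omega>. \<bar>avg_level j (\<lambda>i. u i + \<xi> i \<omega>) (i+1) - avg_level j (\<lambda>i. u i + \<xi> i \<omega>) i\<bar>^2
     = (d + (\<Sum>k\<in>K. cc j k * \<xi> (g k) \<omega>))^2"
    unfolding D d_def by (simp add: distrib_left sum.distrib)
  have sq: "(\<Sum>k\<in>K. (cc j k)^2) = 2/2^j" unfolding K_def by (rule cc_sq)
  note sh = shifted[OF fin inj gI, of d "cc j"]
  show ?thesis unfolding Dx Du using sh sq by (simp add: add_divide_distrib)
qed

lemma sqvar_lemma:
  assumes NI: "{1..N} \<subseteq> I"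
  shows "integrable M (\<lambda>\<omega>. sq_var N h j (\<lambda>i. u i + \<xi> i \<omega>))
    \<and> expectation (\<lambda>\<omega>. sq_var N h j (\<lambda>i. u i + \<xi> i \<omega>))
      = sq_var N h j u + real (N div 2^j - 1) * (s * (2/2^j) / (2^j*h))"
proof -
  note T = term_lemma[OF NI]
  have "expectation (\<lambda>\<omega>. sq_var N h j (\<lambda>i. u i + \<xi> i \<omega>)) =
      (\<Sum>i\<in>{1..<N div 2^j}. expectation (\<lambda>\<omega>. \<bar>avg_level j (\<lambda>i. u i + \<xi> i \<omega>) (i+1) - avg_level j (\<lambda>i. u i + \<xi> i \<omega>) i\<bar>^2 / (2^j*h)))"
    unfolding sq_var_def by (rule Bochner_Integration.integral_sum) (use T in blast)
  also have "\<dots> = (\<Sum>i\<in>{1..<N div 2^j}. \<bar>avg_level j u (i+1) - avg_level j u i\<bar>^2 / (2^j*h) + s * (2/2^j) / (2^j*h))"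
    by (rule sum.cong[OF refl]) (use T in blast)
  also have "\<dots> = sq_var N h j u + real (N div 2^j - 1) * (s * (2/2^j) / (2^j*h))"
    unfolding sq_var_def by (simp add: sum.distrib)
  finally show ?thesis unfolding sq_var_def using T by auto
qed

end


theorem theorem2p1:
  fixes M :: "'a measure" and N :: nat and h \<sigma> :: real
    and u :: "nat \<Rightarrow> real" and \<xi> :: "nat \<Rightarrow> 'a \<Rightarrow> real"
  assumes "prob_space M"
    and "N > 0" and "4 dvd N" and "h > 0" and "\<sigma> \<ge> 0"
    and "prob_space.indep_vars M (\<lambda>_. borel) \<xi> {1..N}"
    and "\<And>i. i \<in> {1..N} \<Longrightarrow> integrable M (\<xi> i)"
    and "\<And>i. i \<in> {1..N} \<Longrightarrow> prob_space.expectation M (\<xi> i) = 0"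
    and "\<And>i. i \<in> {1..N} \<Longrightarrow> integrable M (\<lambda>\<omega>. (\<xi> i \<omega>)^2)"
    and "\<And>i. i \<in> {1..N} \<Longrightarrow>
           prob_space.expectation M (\<lambda>\<omega>. (\<xi> i \<omega>)^2) = 2 * \<sigma>^2 / (real N * h)"
  shows "prob_space.expectation M (\<lambda>\<omega>. sigma_hat_sq N h (\<lambda>i. u i + \<xi> i \<omega>)) - \<sigma>^2 =
    h^2 * ((49/16 - 9/(4 * real N)) * (sq_var N h 0 u - sq_var N h 1 u)
           + (35/8 - 9/(2 * real N)) * (sq_var N h 0 u - sq_var N h 2 u)) / sigma_denom N"
proof -
  define s where "s = 2 * \<sigma>^2 / (real N * h)"
  interpret noise M \<xi> "{1..N}" s
    by (intro noise.intro noise_axioms.intro) (use assms in \<open>auto simp: s_def\<close>)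
  note L0 = sqvar_lemma[of N h 0 u, simplified]
  note L1 = sqvar_lemma[of N h 1 u, simplified]
  note L2 = sqvar_lemma[of N h 2 u, simplified]
  define a where "a = (119/16 - 27/(4 * real N))"
  define b where "b = (9/(4 * real N) - 49/16)"
  define c where "c = (9/(2 * real N) - 35/8)"
  have E: "expectation (\<lambda>\<omega>. sigma_hat_sq N h (\<lambda>i. u i + \<xi> i \<omega>)) =
     h^2 * (a * expectation (\<lambda>\<omega>. sq_var N h 0 (\<lambda>i. u i + \<xi> i \<omega>))
          + b * expectation (\<lambda>\<omega>. sq_var N h 1 (\<lambda>i. u i + \<xi> i \<omega>))
          + c * expectation (\<lambda>\<omega>. sq_var N h 2 (\<lambda>i. u i + \<xi> i \<omega>))) / sigma_denom N"
    unfolding sigma_hat_sq_def a_def[symmetric] b_def[symmetric] c_def[symmetric]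
    using L0 L1 L2 by (simp add: integral_add)
  obtain m where m: "N = 4 * m" using assms(3) by auto
  have m1: "m \<ge> 1" using m assms(2) by auto
  have d1: "N div 2 = 2*m" and d2: "N div 4 = m" using m by auto
  have r0: "real (N - 1) = 4 * real m - 1" using m m1 by auto
  have r1: "real (2*m - 1) = 2 * real m - 1" using m1 by auto
  have r2: "real (m - 1) = real m - 1" using m1 by auto
  have Dpos: "sigma_denom N > 0"
  proof -
    have x: "real N \<ge> 4" using m m1 by auto
    have "819/(16 * real N) \<le> 819/(16*4)" using x by (intro divide_left_mono) auto
    moreover have "189/(8 * real N^2) > 0" using x by auto
    ultimately show ?thesis unfolding sigma_denom_def by linarith
  qed
  define e0 where "e0 = real (N div 2^0 - 1) * (s * (2/2^0) / (2^0*h))"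
  define e1 where "e1 = real (N div 2^1 - 1) * (s * (2/2^1) / (2^1*h))"
  define e2 where "e2 = real (N div 2^2 - 1) * (s * (2/2^2) / (2^2*h))"
  have L0': "expectation (\<lambda>\<omega>. sq_var N h 0 (\<lambda>i. u i + \<xi> i \<omega>)) = sq_var N h 0 u + e0"
    using sqvar_lemma[of N h 0 u] unfolding e0_def by simp
  have L1': "expectation (\<lambda>\<omega>. sq_var N h 1 (\<lambda>i. u i + \<xi> i \<omega>)) = sq_var N h 1 u + e1"
    using sqvar_lemma[of N h 1 u] unfolding e1_def by simp
  have L2': "expectation (\<lambda>\<omega>. sq_var N h 2 (\<lambda>i. u i + \<xi> i \<omega>)) = sq_var N h 2 u + e2"
    using sqvar_lemma[of N h 2 u] unfolding e2_def by simp
  have key: "h^2 * (a * e0 + b * e1 + c * e2) = \<sigma>^2 * sigma_denom N"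
  proof -
    have "e0 = (4 * real m - 1) * (s * 2 / h)" unfolding e0_def using r0 by simp
    moreover have "e1 = (2 * real m - 1) * (s / (2 * h))" unfolding e1_def using d1 r1 by simp
    moreover have "e2 = (real m - 1) * (s / (8 * h))" unfolding e2_def using d2 r2 by simp
    moreover have "h^2 * (a * ((4 * real m - 1) * (s * 2 / h)) + b * ((2 * real m - 1) * (s / (2 * h)))
      + c * ((real m - 1) * (s / (8 * h)))) = \<sigma>^2 * sigma_denom N"
      unfolding a_def b_def c_def s_def sigma_denom_def m using m1 assms(4)
      by (simp add: field_simps power2_eq_square)
    ultimately show ?thesis by simp
  qed
  have abc: "a + b + c = 0" unfolding a_def b_def c_def by (simp add: field_simps)
  have bb: "49/16 - 9/(4 * real N) = - b" and cc': "35/8 - 9/(2 * real N) = - c"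
    unfolding b_def c_def by simp_all
  show ?thesis
    unfolding E L0' L1' L2' bb cc'
  proof -
    define D where "D = sigma_denom N"
    have "D \<noteq> 0" using Dpos unfolding D_def by simp
    have a': "a = - b - c" using abc by simp
    have "h^2 * (a * e0 + b * e1 + c * e2) = \<sigma>^2 * D" using key unfolding D_def .
    then show "h\<^sup>2 * (a * (sq_var N h 0 u + e0) + b * (sq_var N h 1 u + e1) + c * (sq_var N h 2 u + e2)) / sigma_denom N - \<sigma>\<^sup>2 =
      h\<^sup>2 * (- b * (sq_var N h 0 u - sq_var N h 1 u) + - c * (sq_var N h 0 u - sq_var N h 2 u)) / sigma_denom N"
      unfolding D_def[symmetric] using \<open>D \<noteq> 0\<close> unfolding a'
      by (simp add: field_simps)
  qed
qed

end
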